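(* Let $\Omega\subseteq\mathbb{R}^3$ be a domain and let $f=f_0+f_1e_1+f_2e_2\colon\Omega\to\mathbb{R}^3$ be monogenic, i.e. $\overline{\partial} f=0$. Then \[ \overline{\partial}(\overline{x}f+f\overline{x})\overline{\partial}=4\,\overline{\partial} f_0,\qquad \overline{\partial}(|x|^2f)\overline{\partial}=-2\,\overline{f}. \]
   Context: $\mathbb{H}$ denotes the real quaternions with basis $e_0=1,e_1,e_2,e_3$ and $e_1^2=e_2^2=e_3^2=e_1e_2e_3=-1$; $\mathbb{R}^3$ is identified with the reduced quaternions $x=x_0+x_1e_1+x_2e_2$, with conjugate $\overline{x}=x_0-x_1e_1-x_2e_2$ and $|x|^2=x_0^2+x_1^2+x_2^2$; similarly $\overline{f}=f_0-f_1e_1-f_2e_2$. With $\partial_i=\partial/\partial x_i$, for $\mathbb{H}$-valued $g$: $\overline{\partial} g=\partial_0 g+e_1\partial_1 g+e_2\partial_2 g$ (left action), $g\overline{\partial}=\partial_0 g+(\partial_1 g)e_1+(\partial_2 g)e_2$ (right action), and $\overline{\partial} g\overline{\partial}:=\overline{\partial}(g\overline{\partial})$. Products such as $\overline{x}f$ are quaternion products. *)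

theory Defs
  imports "HOL-Analysis.Analysis"
begin

datatype quat = Quat (qre: real) (qi1: real) (qi2: real) (qi3: real)

definition qadd :: "quat \<Rightarrow> quat \<Rightarrow> quat" (infixl "\<oplus>\<^sub>q" 65) where
  "p \<oplus>\<^sub>q q = Quat (qre p + qre q) (qi1 p + qi1 q) (qi2 p + qi2 q) (qi3 p + qi3 q)"

text \<open>Hamilton product with e1^2 = e2^2 = e3^2 = e1 e2 e3 = -1.\<close>
definition qmul :: "quat \<Rightarrow> quat \<Rightarrow> quat" (infixl "\<otimes>\<^sub>q" 70) where
  "p \<otimes>\<^sub>q q = Quat
     (qre p * qre q - qi1 p * qi1 q - qi2 p * qi2 q - qi3 p * qi3 q)
     (qre p * qi1 q + qi1 p * qre q + qi2 p * qi3 q - qi3 p * qi2 q)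
     (qre p * qi2 q - qi1 p * qi3 q + qi2 p * qre q + qi3 p * qi1 q)
     (qre p * qi3 q + qi1 p * qi2 q - qi2 p * qi1 q + qi3 p * qre q)"

definition qscale :: "real \<Rightarrow> quat \<Rightarrow> quat" where
  "qscale r q = Quat (r * qre q) (r * qi1 q) (r * qi2 q) (r * qi3 q)"

definition qzero :: quat where "qzero = Quat 0 0 0 0"
definition qe1 :: quat where "qe1 = Quat 0 1 0 0"
definition qe2 :: quat where "qe2 = Quat 0 0 1 0"

definition qconj :: "quat \<Rightarrow> quat" where
  "qconj q = Quat (qre q) (- qi1 q) (- qi2 q) (- qi3 q)"

text \<open>R^3 = real^3 with coordinates x$1 = x_0, x$2 = x_1, x$3 = x_2,
  identified with reduced quaternions x_0 + x_1 e1 + x_2 e2.\<close>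
definition red :: "real^3 \<Rightarrow> quat" where
  "red x = Quat (x$1) (x$2) (x$3) 0"

definition rquat :: "real \<Rightarrow> quat" where
  "rquat r = Quat r 0 0 0"

text \<open>Partial derivatives of real-valued functions on R^3: index 1,2,3 :: 3
  correspond to the paper's d/dx_0, d/dx_1, d/dx_2.\<close>
definition has_pd :: "(real^3 \<Rightarrow> real) \<Rightarrow> 3 \<Rightarrow> real^3 \<Rightarrow> real \<Rightarrow> bool" where
  "has_pd \<phi> i x d \<longleftrightarrow> ((\<lambda>t. \<phi> (x + t *\<^sub>R axis i 1)) has_real_derivative d) (at 0)"

definition pd :: "3 \<Rightarrow> (real^3 \<Rightarrow> real) \<Rightarrow> real^3 \<Rightarrow> real" where
  "pd i \<phi> x = deriv (\<lambda>t. \<phi> (x + t *\<^sub>R axis i 1)) 0"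

definition C2_on :: "(real^3) set \<Rightarrow> (real^3 \<Rightarrow> real) \<Rightarrow> bool" where
  "C2_on \<Omega> \<phi> \<longleftrightarrow> continuous_on \<Omega> \<phi> \<and>
     (\<forall>i. (\<forall>x\<in>\<Omega>. has_pd \<phi> i x (pd i \<phi> x)) \<and> continuous_on \<Omega> (pd i \<phi>)) \<and>
     (\<forall>i j. (\<forall>x\<in>\<Omega>. has_pd (pd i \<phi>) j x (pd j (pd i \<phi>) x))
            \<and> continuous_on \<Omega> (pd j (pd i \<phi>)))"

definition qpd :: "3 \<Rightarrow> (real^3 \<Rightarrow> quat) \<Rightarrow> real^3 \<Rightarrow> quat" where
  "qpd i g x = Quat (pd i (\<lambda>y. qre (g y)) x) (pd i (\<lambda>y. qi1 (g y)) x)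
                    (pd i (\<lambda>y. qi2 (g y)) x) (pd i (\<lambda>y. qi3 (g y)) x)"

definition dbarL :: "(real^3 \<Rightarrow> quat) \<Rightarrow> real^3 \<Rightarrow> quat" where
  "dbarL g x = qpd 1 g x \<oplus>\<^sub>q qe1 \<otimes>\<^sub>q qpd 2 g x \<oplus>\<^sub>q qe2 \<otimes>\<^sub>q qpd 3 g x"

definition dbarR :: "(real^3 \<Rightarrow> quat) \<Rightarrow> real^3 \<Rightarrow> quat" where
  "dbarR g x = qpd 1 g x \<oplus>\<^sub>q qpd 2 g x \<otimes>\<^sub>q qe1 \<oplus>\<^sub>q qpd 3 g x \<otimes>\<^sub>q qe2"

text \<open>dbar g dbar := dbar (g dbar).\<close>
definition dbarLR :: "(real^3 \<Rightarrow> quat) \<Rightarrow> real^3 \<Rightarrow> quat" where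
  "dbarLR g = dbarL (dbarR g)"

end

theory Submission
  imports Defs
begin


lemma line_shift:
  fixes \<phi> :: "real^3 \<Rightarrow> real"
  assumes "((\<lambda>t. \<phi> ((y + s *\<^sub>R a) + t *\<^sub>R a)) has_real_derivative d) (at 0)"
  shows "((\<lambda>t. \<phi> (y + t *\<^sub>R a)) has_real_derivative d) (at s)"
proof -
  have "((\<lambda>t. \<phi> (y + (t + s) *\<^sub>R a)) has_real_derivative d) (at 0)"
    using assms by (simp add: algebra_simps)
  then show ?thesis using DERIV_shift[of "\<lambda>t. \<phi> (y + t *\<^sub>R a)" d 0 s] by simp
qed

lemma mixed_mvt:
  fixes \<phi> P Q :: "real^3 \<Rightarrow> real" and a b x :: "real^3" and h :: real
  assumes h: "h > 0"
    and inU: "\<And>s t. \<bar>s\<bar> \<le> h \<Longrightarrow> \<bar>t\<bar> \<le> h \<Longrightarrow> x + s *\<^sub>R a + t *\<^sub>R b \<in> U"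
    and dP: "\<And>y. y \<in> U \<Longrightarrow> ((\<lambda>t. \<phi> (y + t *\<^sub>R a)) has_real_derivative P y) (at 0)"
    and dQ: "\<And>y. y \<in> U \<Longrightarrow> ((\<lambda>t. P (y + t *\<^sub>R b)) has_real_derivative Q y) (at 0)"
  shows "\<exists>s t. \<bar>s\<bar> \<le> h \<and> \<bar>t\<bar> \<le> h \<and>
     \<phi> (x + h *\<^sub>R a + h *\<^sub>R b) - \<phi> (x + h *\<^sub>R a) - \<phi> (x + h *\<^sub>R b) + \<phi> x
       = h * h * Q (x + s *\<^sub>R a + t *\<^sub>R b)"
proof -
  define g where "g s = \<phi> ((x + h *\<^sub>R b) + s *\<^sub>R a) - \<phi> (x + s *\<^sub>R a)" for s
  have "DERIV g s :> P ((x + h *\<^sub>R b) + s *\<^sub>R a) - P (x + s *\<^sub>R a)" if "0 \<le> s" "s \<le> h" for s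
  proof -
    have m1: "(x + h *\<^sub>R b) + s *\<^sub>R a \<in> U" using inU[of s h] that h by (simp add: algebra_simps)
    have m2: "x + s *\<^sub>R a \<in> U" using inU[of s 0] that h by simp
    have d1: "((\<lambda>t. \<phi> ((x + h *\<^sub>R b) + t *\<^sub>R a)) has_real_derivative P ((x + h *\<^sub>R b) + s *\<^sub>R a)) (at s)"
      by (rule line_shift) (use dP[OF m1] in \<open>simp add: algebra_simps\<close>)
    have d2: "((\<lambda>t. \<phi> (x + t *\<^sub>R a)) has_real_derivative P (x + s *\<^sub>R a)) (at s)"
      by (rule line_shift) (use dP[OF m2] in \<open>simp add: algebra_simps\<close>)
    show ?thesis unfolding g_def by (intro DERIV_diff d1 d2)
  qed
  from MVT2[OF h this] obtain s where s: "0 < s" "s < h"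
    "g h - g 0 = (h - 0) * (P ((x + h *\<^sub>R b) + s *\<^sub>R a) - P (x + s *\<^sub>R a))" by blast
  have "DERIV (\<lambda>t. P ((x + s *\<^sub>R a) + t *\<^sub>R b)) t :> Q ((x + s *\<^sub>R a) + t *\<^sub>R b)" if "0 \<le> t" "t \<le> h" for t
  proof -
    have m1: "(x + s *\<^sub>R a) + t *\<^sub>R b \<in> U" using inU[of s t] that h s by (simp add: algebra_simps)
    show ?thesis
      by (rule line_shift) (use dQ[OF m1] in \<open>simp add: algebra_simps\<close>)
  qed
  from MVT2[OF h this] obtain t where t: "0 < t" "t < h"
    "P ((x + s *\<^sub>R a) + h *\<^sub>R b) - P ((x + s *\<^sub>R a) + 0 *\<^sub>R b) = (h - 0) * Q ((x + s *\<^sub>R a) + t *\<^sub>R b)" by blast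
  show ?thesis
  proof (intro exI conjI)
    show "\<bar>s\<bar> \<le> h" "\<bar>t\<bar> \<le> h" using s t by auto
    have "\<phi> (x + h *\<^sub>R a + h *\<^sub>R b) - \<phi> (x + h *\<^sub>R a) - \<phi> (x + h *\<^sub>R b) + \<phi> x = g h - g 0"
      unfolding g_def by (simp add: algebra_simps)
    also have "\<dots> = h * (P ((x + s *\<^sub>R a) + h *\<^sub>R b) - P ((x + s *\<^sub>R a) + 0 *\<^sub>R b))"
      using s(3) by (simp add: algebra_simps)
    also have "\<dots> = h * h * Q (x + s *\<^sub>R a + t *\<^sub>R b)" using t(3) by simp
    finally show "\<phi> (x + h *\<^sub>R a + h *\<^sub>R b) - \<phi> (x + h *\<^sub>R a) - \<phi> (x + h *\<^sub>R b) + \<phi> x = h * h * Q (x + s *\<^sub>R a + t *\<^sub>R b)" .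
  qed
qed

lemma abs_contra: "\<bar>u - A\<bar> < \<bar>A - B\<bar> / 2 \<Longrightarrow> \<bar>v - B\<bar> < \<bar>A - B\<bar> / 2 \<Longrightarrow> u = v \<Longrightarrow> False" for u v A B :: real
  by (auto simp: abs_if split: if_splits)

lemma clairaut:
  fixes \<phi> :: "real^3 \<Rightarrow> real"
  assumes "open \<Omega>" "x \<in> \<Omega>" "C2_on \<Omega> \<phi>"
  shows "pd j (pd i \<phi>) x = pd i (pd j \<phi>) x"
proof (rule ccontr)
  let ?A = "pd j (pd i \<phi>) x" and ?B = "pd i (pd j \<phi>) x"
  assume ne: "?A \<noteq> ?B"
  define e where "e = \<bar>?A - ?B\<bar> / 2"
  have e: "e > 0" using ne by (simp add: e_def)
  have c1: "continuous_on \<Omega> (pd j (pd i \<phi>))" and c2: "continuous_on \<Omega> (pd i (pd j \<phi>))"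
    using assms(3) unfolding C2_on_def by auto
  obtain d1 where d1: "d1 > 0" "\<And>y. y \<in> \<Omega> \<Longrightarrow> dist y x < d1 \<Longrightarrow> dist (pd j (pd i \<phi>) y) ?A < e"
    using c1 assms(2) e unfolding continuous_on_iff by blast
  obtain d2 where d2: "d2 > 0" "\<And>y. y \<in> \<Omega> \<Longrightarrow> dist y x < d2 \<Longrightarrow> dist (pd i (pd j \<phi>) y) ?B < e"
    using c2 assms(2) e unfolding continuous_on_iff by blast
  obtain r where r: "r > 0" "ball x r \<subseteq> \<Omega>" using assms(1,2) open_contains_ball by blast
  define h where "h = min r (min d1 d2) / 3"
  have h: "h > 0" using r d1 d2 by (simp add: h_def)
  define U where "U = ball x (min r (min d1 d2))"
  have UO: "U \<subseteq> \<Omega>" using r unfolding U_def by auto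
  have inU: "x + s *\<^sub>R a + t *\<^sub>R b \<in> U" if "\<bar>s\<bar> \<le> h" "\<bar>t\<bar> \<le> h" "norm a = 1" "norm b = 1" for s t and a b :: "real^3"
  proof -
    have "norm (s *\<^sub>R a + t *\<^sub>R b) \<le> \<bar>s\<bar> + \<bar>t\<bar>"
      using norm_triangle_ineq[of "s *\<^sub>R a" "t *\<^sub>R b"] that by simp
    also have "\<dots> < min r (min d1 d2)" using that h unfolding h_def by linarith
    finally have "norm (s *\<^sub>R a + t *\<^sub>R b) < min r (min d1 d2)" .
    moreover have "dist x (x + s *\<^sub>R a + t *\<^sub>R b) = norm (s *\<^sub>R a + t *\<^sub>R b)"
      by (metis add.assoc add_diff_cancel_left' dist_commute dist_norm)
    ultimately show ?thesis unfolding U_def by simp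
  qed
  have pdd: "\<And>y k. y \<in> \<Omega> \<Longrightarrow> ((\<lambda>t. \<phi> (y + t *\<^sub>R axis k 1)) has_real_derivative pd k \<phi> y) (at 0)"
    using assms(3) unfolding C2_on_def has_pd_def by blast
  have pdd2: "\<And>y k l. y \<in> \<Omega> \<Longrightarrow> ((\<lambda>t. pd k \<phi> (y + t *\<^sub>R axis l 1)) has_real_derivative pd l (pd k \<phi>) y) (at 0)"
    using assms(3) unfolding C2_on_def has_pd_def by blast
  have iU: "\<And>s t k l. \<bar>s\<bar> \<le> h \<Longrightarrow> \<bar>t\<bar> \<le> h \<Longrightarrow> x + s *\<^sub>R axis k 1 + t *\<^sub>R axis l 1 \<in> U"
    using inU by simp
  obtain s t where st: "\<bar>s\<bar> \<le> h" "\<bar>t\<bar> \<le> h"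
    "\<phi> (x + h *\<^sub>R axis i 1 + h *\<^sub>R axis j 1) - \<phi> (x + h *\<^sub>R axis i 1) - \<phi> (x + h *\<^sub>R axis j 1) + \<phi> x
       = h * h * pd j (pd i \<phi>) (x + s *\<^sub>R axis i 1 + t *\<^sub>R axis j 1)"
    using mixed_mvt[OF h, of x "axis i 1" "axis j 1" U \<phi> "pd i \<phi>" "pd j (pd i \<phi>)"]
      iU pdd pdd2 UO by blast
  obtain s' t' where st': "\<bar>s'\<bar> \<le> h" "\<bar>t'\<bar> \<le> h"
    "\<phi> (x + h *\<^sub>R axis j 1 + h *\<^sub>R axis i 1) - \<phi> (x + h *\<^sub>R axis j 1) - \<phi> (x + h *\<^sub>R axis i 1) + \<phi> x
       = h * h * pd i (pd j \<phi>) (x + s' *\<^sub>R axis j 1 + t' *\<^sub>R axis i 1)"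
    using mixed_mvt[OF h, of x "axis j 1" "axis i 1" U \<phi> "pd j \<phi>" "pd i (pd j \<phi>)"]
      iU pdd pdd2 UO by blast
  have eq: "pd j (pd i \<phi>) (x + s *\<^sub>R axis i 1 + t *\<^sub>R axis j 1) = pd i (pd j \<phi>) (x + s' *\<^sub>R axis j 1 + t' *\<^sub>R axis i 1)"
    using st(3) st'(3) h by (simp add: algebra_simps)
  have p1: "x + s *\<^sub>R axis i 1 + t *\<^sub>R axis j 1 \<in> U" using iU st by simp
  have p2: "x + s' *\<^sub>R axis j 1 + t' *\<^sub>R axis i 1 \<in> U" using iU st' by simp
  have "dist (pd j (pd i \<phi>) (x + s *\<^sub>R axis i 1 + t *\<^sub>R axis j 1)) ?A < e"
    using d1(2)[of "x + s *\<^sub>R axis i 1 + t *\<^sub>R axis j 1"] p1 UO unfolding U_def by (auto simp: dist_commute)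
  moreover have "dist (pd i (pd j \<phi>) (x + s' *\<^sub>R axis j 1 + t' *\<^sub>R axis i 1)) ?B < e"
    using d2(2)[of "x + s' *\<^sub>R axis j 1 + t' *\<^sub>R axis i 1"] p2 UO unfolding U_def by (auto simp: dist_commute)
  ultimately show False using eq unfolding e_def dist_real_def
    using abs_contra by blast
qed



definition dpd :: "(real^3 \<Rightarrow> real) \<Rightarrow> 3 \<Rightarrow> real^3 \<Rightarrow> bool" where
  "dpd \<phi> i x \<longleftrightarrow> has_pd \<phi> i x (pd i \<phi> x)"

lemma has_pd_pd: "has_pd \<phi> i x d \<Longrightarrow> pd i \<phi> x = d"
  unfolding has_pd_def pd_def by (rule DERIV_imp_deriv)

lemma has_pd_dpd: "has_pd \<phi> i x d \<Longrightarrow> dpd \<phi> i x"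
  unfolding dpd_def using has_pd_pd by metis

lemma has_pd_self: "has_pd \<phi> i x d \<Longrightarrow> has_pd \<phi> i x (pd i \<phi> x)"
  using has_pd_pd by metis

lemma has_pd_add: "has_pd \<phi> i x a \<Longrightarrow> has_pd \<psi> i x b \<Longrightarrow> has_pd (\<lambda>y. \<phi> y + \<psi> y) i x (a + b)"
  unfolding has_pd_def by (rule DERIV_add)
lemma has_pd_diff: "has_pd \<phi> i x a \<Longrightarrow> has_pd \<psi> i x b \<Longrightarrow> has_pd (\<lambda>y. \<phi> y - \<psi> y) i x (a - b)"
  unfolding has_pd_def by (rule DERIV_diff)
lemma has_pd_minus: "has_pd \<phi> i x a \<Longrightarrow> has_pd (\<lambda>y. - \<phi> y) i x (- a)"
  unfolding has_pd_def by (rule DERIV_minus)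
lemma has_pd_mult: "has_pd \<phi> i x a \<Longrightarrow> has_pd \<psi> i x b \<Longrightarrow> has_pd (\<lambda>y. \<phi> y * \<psi> y) i x (a * \<psi> x + \<phi> x * b)"
  unfolding has_pd_def by (drule (1) DERIV_mult) (simp add: mult.commute)
lemma has_pd_const: "has_pd (\<lambda>y. c) i x 0"
  unfolding has_pd_def by simp
lemma has_pd_coord: "has_pd (\<lambda>y. y $ k) i x (if k = i then 1 else 0)"
  unfolding has_pd_def by (auto simp: axis_def intro!: derivative_eq_intros)

lemma pd_const[simp]: "pd i (\<lambda>y. c) = (\<lambda>y. 0)"
  using has_pd_pd[OF has_pd_const] by blast
lemma pd_coord[simp]: "pd i (\<lambda>y. y $ k) = (\<lambda>y. if k = i then 1 else 0)"
  using has_pd_pd[OF has_pd_coord] by blast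

lemma has_pd_local:
  assumes "open \<Omega>" "x \<in> \<Omega>" "\<And>y. y \<in> \<Omega> \<Longrightarrow> \<phi> y = \<psi> y" "has_pd \<psi> i x d"
  shows "has_pd \<phi> i x d"
proof -
  obtain r where r: "r > 0" "ball x r \<subseteq> \<Omega>" using assms(1,2) open_contains_ball by blast
  have ev: "eventually (\<lambda>t. \<phi> (x + t *\<^sub>R axis i 1) = \<psi> (x + t *\<^sub>R axis i 1)) (at 0)"
    unfolding eventually_at
  proof (intro exI[of _ r] conjI ballI impI)
    fix t :: real assume "t \<in> UNIV" "t \<noteq> 0 \<and> dist t 0 < r"
    then have "x + t *\<^sub>R axis i 1 \<in> ball x r" by (simp add: dist_norm)
    then show "\<phi> (x + t *\<^sub>R axis i 1) = \<psi> (x + t *\<^sub>R axis i 1)" using r assms(3) by auto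
  qed (use r in auto)
  have "\<phi> (x + 0 *\<^sub>R axis i 1) = \<psi> (x + 0 *\<^sub>R axis i 1)" using assms(2,3) by simp
  then show ?thesis using assms(4) has_field_derivative_cong_eventually[OF ev] unfolding has_pd_def by simp
qed

definition C1 :: "(real^3) set \<Rightarrow> (real^3 \<Rightarrow> real) \<Rightarrow> bool" where
  "C1 \<Omega> \<phi> \<longleftrightarrow> (\<forall>i. \<forall>y\<in>\<Omega>. dpd \<phi> i y)"

definition C2' :: "(real^3) set \<Rightarrow> (real^3 \<Rightarrow> real) \<Rightarrow> bool" where
  "C2' \<Omega> \<phi> \<longleftrightarrow> C1 \<Omega> \<phi> \<and> (\<forall>i. C1 \<Omega> (pd i \<phi>))"

lemma C2_C2': "C2_on \<Omega> \<phi> \<Longrightarrow> C2' \<Omega> \<phi>"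
  unfolding C2_on_def C2'_def C1_def dpd_def by blast

locale opn = fixes \<Omega> :: "(real^3) set" assumes opn: "open \<Omega>"
begin

lemma C1_local: "(\<And>y. y \<in> \<Omega> \<Longrightarrow> \<phi> y = \<psi> y) \<Longrightarrow> C1 \<Omega> \<psi> \<Longrightarrow> C1 \<Omega> \<phi>"
  unfolding C1_def dpd_def by (blast intro: has_pd_self has_pd_local[OF opn])

lemma pd_local: "(\<And>y. y \<in> \<Omega> \<Longrightarrow> \<phi> y = \<psi> y) \<Longrightarrow> C1 \<Omega> \<psi> \<Longrightarrow> x \<in> \<Omega> \<Longrightarrow> pd i \<phi> x = pd i \<psi> x"
  unfolding C1_def dpd_def by (blast intro: has_pd_pd has_pd_local[OF opn])

lemma C1D: "C1 \<Omega> \<phi> \<Longrightarrow> y \<in> \<Omega> \<Longrightarrow> has_pd \<phi> i y (pd i \<phi> y)"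
  unfolding C1_def dpd_def by blast

lemma C1_add[simp]: "C1 \<Omega> \<phi> \<Longrightarrow> C1 \<Omega> \<psi> \<Longrightarrow> C1 \<Omega> (\<lambda>y. \<phi> y + \<psi> y)"
  unfolding C1_def dpd_def by (blast intro: has_pd_self[OF has_pd_add])
lemma C1_diff[simp]: "C1 \<Omega> \<phi> \<Longrightarrow> C1 \<Omega> \<psi> \<Longrightarrow> C1 \<Omega> (\<lambda>y. \<phi> y - \<psi> y)"
  unfolding C1_def dpd_def by (blast intro: has_pd_self[OF has_pd_diff])
lemma C1_minus[simp]: "C1 \<Omega> \<phi> \<Longrightarrow> C1 \<Omega> (\<lambda>y. - \<phi> y)"
  unfolding C1_def dpd_def by (blast intro: has_pd_self[OF has_pd_minus])
lemma C1_mult[simp]: "C1 \<Omega> \<phi> \<Longrightarrow> C1 \<Omega> \<psi> \<Longrightarrow> C1 \<Omega> (\<lambda>y. \<phi> y * \<psi> y)"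
  unfolding C1_def dpd_def by (blast intro: has_pd_self[OF has_pd_mult])
lemma C1_const[simp]: "C1 \<Omega> (\<lambda>y. c)"
  unfolding C1_def dpd_def by (blast intro: has_pd_self[OF has_pd_const])
lemma C1_coord[simp]: "C1 \<Omega> (\<lambda>y. y $ k)"
  unfolding C1_def dpd_def by (blast intro: has_pd_self[OF has_pd_coord])

lemma pd_add[simp]: "C1 \<Omega> \<phi> \<Longrightarrow> C1 \<Omega> \<psi> \<Longrightarrow> x \<in> \<Omega> \<Longrightarrow> pd i (\<lambda>y. \<phi> y + \<psi> y) x = pd i \<phi> x + pd i \<psi> x"
  by (intro has_pd_pd has_pd_add C1D)
lemma pd_diff[simp]: "C1 \<Omega> \<phi> \<Longrightarrow> C1 \<Omega> \<psi> \<Longrightarrow> x \<in> \<Omega> \<Longrightarrow> pd i (\<lambda>y. \<phi> y - \<psi> y) x = pd i \<phi> x - pd i \<psi> x"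
  by (intro has_pd_pd has_pd_diff C1D)
lemma pd_minus[simp]: "C1 \<Omega> \<phi> \<Longrightarrow> x \<in> \<Omega> \<Longrightarrow> pd i (\<lambda>y. - \<phi> y) x = - pd i \<phi> x"
  by (intro has_pd_pd has_pd_minus C1D)
lemma pd_mult[simp]: "C1 \<Omega> \<phi> \<Longrightarrow> C1 \<Omega> \<psi> \<Longrightarrow> x \<in> \<Omega> \<Longrightarrow> pd i (\<lambda>y. \<phi> y * \<psi> y) x = pd i \<phi> x * \<psi> x + \<phi> x * pd i \<psi> x"
  by (intro has_pd_pd has_pd_mult C1D)

lemma C2'_C1[simp]: "C2' \<Omega> \<phi> \<Longrightarrow> C1 \<Omega> \<phi>" unfolding C2'_def by blast
lemma C2'_pd[simp]: "C2' \<Omega> \<phi> \<Longrightarrow> C1 \<Omega> (pd i \<phi>)" unfolding C2'_def by blast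

lemma C2'_add[simp]: assumes h1: "C2' \<Omega> \<phi>" and h2: "C2' \<Omega> \<psi>"
  shows "C2' \<Omega> (\<lambda>y. \<phi> y + \<psi> y)"
  unfolding C2'_def
proof (intro conjI allI)
  fix i show "C1 \<Omega> (pd i (\<lambda>y. \<phi> y + \<psi> y))"
    by (rule C1_local[of _ "\<lambda>y. pd i \<phi> y + pd i \<psi> y"]) (use h1 h2 in \<open>auto\<close>)
qed (use h1 h2 in \<open>auto\<close>)

lemma C2'_diff[simp]: assumes h1: "C2' \<Omega> \<phi>" and h2: "C2' \<Omega> \<psi>"
  shows "C2' \<Omega> (\<lambda>y. \<phi> y - \<psi> y)"
  unfolding C2'_def
proof (intro conjI allI)
  fix i show "C1 \<Omega> (pd i (\<lambda>y. \<phi> y - \<psi> y))"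
    by (rule C1_local[of _ "\<lambda>y. pd i \<phi> y - pd i \<psi> y"]) (use h1 h2 in \<open>auto\<close>)
qed (use h1 h2 in \<open>auto\<close>)

lemma C2'_minus[simp]: assumes h1: "C2' \<Omega> \<phi>"
  shows "C2' \<Omega> (\<lambda>y. - \<phi> y)"
  unfolding C2'_def
proof (intro conjI allI)
  fix i show "C1 \<Omega> (pd i (\<lambda>y. - \<phi> y))"
    by (rule C1_local[of _ "\<lambda>y. - pd i \<phi> y"]) (use h1 in \<open>auto\<close>)
qed (use h1 in \<open>auto\<close>)

lemma C2'_mult[simp]: assumes h1: "C2' \<Omega> \<phi>" and h2: "C2' \<Omega> \<psi>"
  shows "C2' \<Omega> (\<lambda>y. \<phi> y * \<psi> y)"
  unfolding C2'_def
proof (intro conjI allI)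
  fix i show "C1 \<Omega> (pd i (\<lambda>y. \<phi> y * \<psi> y))"
    by (rule C1_local[of _ "\<lambda>y. pd i \<phi> y * \<psi> y + \<phi> y * pd i \<psi> y"]) (use h1 h2 in \<open>auto\<close>)
qed (use h1 h2 in \<open>auto\<close>)

lemma C2'_const[simp]: "C2' \<Omega> (\<lambda>y. c)"
  unfolding C2'_def by simp
lemma C2'_coord[simp]: "C2' \<Omega> (\<lambda>y. y $ k)"
  unfolding C2'_def by simp

lemma pd2_add[simp]: "C2' \<Omega> \<phi> \<Longrightarrow> C2' \<Omega> \<psi> \<Longrightarrow> x \<in> \<Omega> \<Longrightarrow>
   pd j (pd i (\<lambda>y. \<phi> y + \<psi> y)) x = pd j (pd i \<phi>) x + pd j (pd i \<psi>) x"
  by (subst pd_local[of _ "\<lambda>y. pd i \<phi> y + pd i \<psi> y"]) auto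
lemma pd2_diff[simp]: "C2' \<Omega> \<phi> \<Longrightarrow> C2' \<Omega> \<psi> \<Longrightarrow> x \<in> \<Omega> \<Longrightarrow>
   pd j (pd i (\<lambda>y. \<phi> y - \<psi> y)) x = pd j (pd i \<phi>) x - pd j (pd i \<psi>) x"
  by (subst pd_local[of _ "\<lambda>y. pd i \<phi> y - pd i \<psi> y"]) auto
lemma pd2_minus[simp]: "C2' \<Omega> \<phi> \<Longrightarrow> x \<in> \<Omega> \<Longrightarrow>
   pd j (pd i (\<lambda>y. - \<phi> y)) x = - pd j (pd i \<phi>) x"
  by (subst pd_local[of _ "\<lambda>y. - pd i \<phi> y"]) auto
lemma pd2_mult[simp]: "C2' \<Omega> \<phi> \<Longrightarrow> C2' \<Omega> \<psi> \<Longrightarrow> x \<in> \<Omega> \<Longrightarrow>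
   pd j (pd i (\<lambda>y. \<phi> y * \<psi> y)) x = pd j (pd i \<phi>) x * \<psi> x + pd i \<phi> x * pd j \<psi> x
      + pd j \<phi> x * pd i \<psi> x + \<phi> x * pd j (pd i \<psi>) x"
  by (subst pd_local[of _ "\<lambda>y. pd i \<phi> y * \<psi> y + \<phi> y * pd i \<psi> y"]) auto

end


lemma norm_sq3: "(norm (y::real^3))\<^sup>2 = y$1 * y$1 + y$2 * y$2 + y$3 * y$3"
  by (simp add: power2_norm_eq_inner inner_vec_def sum_3)

context opn begin
lemma pd_zero_local: "(\<And>y. y \<in> \<Omega> \<Longrightarrow> \<phi> y = 0) \<Longrightarrow> x \<in> \<Omega> \<Longrightarrow> pd j \<phi> x = 0"
  using pd_local[of \<phi> "\<lambda>y. 0" x j] by simp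
end

theorem lemma4p3:
  fixes \<Omega> :: "(real^3) set" and f :: "real^3 \<Rightarrow> real^3"
  assumes "open \<Omega>" and "connected \<Omega>" and "\<Omega> \<noteq> {}"
    and "\<And>k. C2_on \<Omega> (\<lambda>y. f y $ k)"
    and "\<And>x. x \<in> \<Omega> \<Longrightarrow> dbarL (\<lambda>y. red (f y)) x = qzero"
  shows "\<forall>x\<in>\<Omega>.
      dbarLR (\<lambda>y. qconj (red y) \<otimes>\<^sub>q red (f y) \<oplus>\<^sub>q red (f y) \<otimes>\<^sub>q qconj (red y)) x
        = qscale 4 (dbarL (\<lambda>y. rquat (f y $ 1)) x)
    \<and> dbarLR (\<lambda>y. qscale ((norm y)\<^sup>2) (red (f y))) x
        = qscale (-2) (qconj (red (f x)))"
proof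
  fix x assume x[simp]: "x \<in> \<Omega>"
  interpret opn \<Omega> using assms(1) by unfold_locales
  have CF[simp]: "C2' \<Omega> (\<lambda>y. f y $ k)" for k using C2_C2' assms(4) by blast
  have sym[simp]: "pd 2 (pd 1 (\<lambda>y. f y $ k)) x = pd 1 (pd 2 (\<lambda>y. f y $ k)) x"
    "pd 3 (pd 1 (\<lambda>y. f y $ k)) x = pd 1 (pd 3 (\<lambda>y. f y $ k)) x"
    "pd 3 (pd 2 (\<lambda>y. f y $ k)) x = pd 2 (pd 3 (\<lambda>y. f y $ k)) x" for k
    using clairaut[OF assms(1) x assms(4)] by blast+
  have mono: "pd 1 (\<lambda>y. f y $ 1) y - pd 2 (\<lambda>y. f y $ 2) y - pd 3 (\<lambda>y. f y $ 3) y = 0 \<and> pd 1 (\<lambda>y. f y $ 2) y + pd 2 (\<lambda>y. f y $ 1) y = 0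
     \<and> pd 1 (\<lambda>y. f y $ 3) y + pd 3 (\<lambda>y. f y $ 1) y = 0 \<and> pd 2 (\<lambda>y. f y $ 3) y - pd 3 (\<lambda>y. f y $ 2) y = 0" if "y \<in> \<Omega>" for y
    using assms(5)[OF that] by (simp add: dbarLR_def dbarR_def dbarL_def qpd_def qadd_def qmul_def qe1_def qe2_def red_def qzero_def qconj_def qscale_def rquat_def)
  have Dj1: "pd j (\<lambda>y. pd 1 (\<lambda>y. f y $ 1) y - pd 2 (\<lambda>y. f y $ 2) y - pd 3 (\<lambda>y. f y $ 3) y) x = 0" for j
    by (rule pd_zero_local) (use mono in auto)
  have Dj2: "pd j (\<lambda>y. pd 1 (\<lambda>y. f y $ 2) y + pd 2 (\<lambda>y. f y $ 1) y) x = 0" for j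
    by (rule pd_zero_local) (use mono in auto)
  have Dj3: "pd j (\<lambda>y. pd 1 (\<lambda>y. f y $ 3) y + pd 3 (\<lambda>y. f y $ 1) y) x = 0" for j
    by (rule pd_zero_local) (use mono in auto)
  have Dj4: "pd j (\<lambda>y. pd 2 (\<lambda>y. f y $ 3) y - pd 3 (\<lambda>y. f y $ 2) y) x = 0" for j
    by (rule pd_zero_local) (use mono in auto)
  note D = Dj1[of 1, simplified] Dj1[of 2, simplified] Dj1[of 3, simplified]
    Dj2[of 1, simplified] Dj2[of 2, simplified] Dj2[of 3, simplified]
    Dj3[of 1, simplified] Dj3[of 2, simplified] Dj3[of 3, simplified]
    Dj4[of 1, simplified] Dj4[of 2, simplified] Dj4[of 3, simplified]
  have s1[simp]: "pd 1 (pd 1 (\<lambda>y. f y $ 1)) x = pd 1 (pd 2 (\<lambda>y. f y $ 2)) x + pd 1 (pd 3 (\<lambda>y. f y $ 3)) x" using D by linarith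
  have s2[simp]: "pd 1 (pd 2 (\<lambda>y. f y $ 1)) x = pd 2 (pd 2 (\<lambda>y. f y $ 2)) x + pd 2 (pd 3 (\<lambda>y. f y $ 3)) x" using D by linarith
  have s3[simp]: "pd 1 (pd 3 (\<lambda>y. f y $ 1)) x = pd 2 (pd 2 (\<lambda>y. f y $ 3)) x + pd 3 (pd 3 (\<lambda>y. f y $ 3)) x" using D by linarith
  have s4[simp]: "pd 2 (pd 2 (\<lambda>y. f y $ 1)) x = - pd 1 (pd 2 (\<lambda>y. f y $ 2)) x" using D by linarith
  have s5[simp]: "pd 2 (pd 3 (\<lambda>y. f y $ 1)) x = - pd 1 (pd 2 (\<lambda>y. f y $ 3)) x" using D by linarith
  have s6[simp]: "pd 3 (pd 3 (\<lambda>y. f y $ 1)) x = - pd 1 (pd 3 (\<lambda>y. f y $ 3)) x" using D by linarith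
  have s7[simp]: "pd 1 (pd 1 (\<lambda>y. f y $ 2)) x = - pd 2 (pd 2 (\<lambda>y. f y $ 2)) x - pd 2 (pd 3 (\<lambda>y. f y $ 3)) x" using D by linarith
  have s8[simp]: "pd 1 (pd 3 (\<lambda>y. f y $ 2)) x = pd 1 (pd 2 (\<lambda>y. f y $ 3)) x" using D by linarith
  have s9[simp]: "pd 2 (pd 3 (\<lambda>y. f y $ 2)) x = pd 2 (pd 2 (\<lambda>y. f y $ 3)) x" using D by linarith
  have s10[simp]: "pd 3 (pd 3 (\<lambda>y. f y $ 2)) x = pd 2 (pd 3 (\<lambda>y. f y $ 3)) x" using D by linarith
  have s11[simp]: "pd 1 (pd 1 (\<lambda>y. f y $ 3)) x = - pd 2 (pd 2 (\<lambda>y. f y $ 3)) x - pd 3 (pd 3 (\<lambda>y. f y $ 3)) x" using D by linarith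
  have m: "pd 1 (\<lambda>y. f y $ 1) x - pd 2 (\<lambda>y. f y $ 2) x - pd 3 (\<lambda>y. f y $ 3) x = 0 \<and> pd 1 (\<lambda>y. f y $ 2) x + pd 2 (\<lambda>y. f y $ 1) x = 0
     \<and> pd 1 (\<lambda>y. f y $ 3) x + pd 3 (\<lambda>y. f y $ 1) x = 0 \<and> pd 2 (\<lambda>y. f y $ 3) x - pd 3 (\<lambda>y. f y $ 2) x = 0" using mono x by blast
  have f1[simp]: "pd 1 (\<lambda>y. f y $ 1) x = pd 2 (\<lambda>y. f y $ 2) x + pd 3 (\<lambda>y. f y $ 3) x" using m by linarith
  have f2[simp]: "pd 1 (\<lambda>y. f y $ 2) x = - pd 2 (\<lambda>y. f y $ 1) x" using m by linarith
  have f3[simp]: "pd 1 (\<lambda>y. f y $ 3) x = - pd 3 (\<lambda>y. f y $ 1) x" using m by linarith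
  have f4[simp]: "pd 3 (\<lambda>y. f y $ 2) x = pd 2 (\<lambda>y. f y $ 3) x" using m by linarith
  show "dbarLR (\<lambda>y. qconj (red y) \<otimes>\<^sub>q red (f y) \<oplus>\<^sub>q red (f y) \<otimes>\<^sub>q qconj (red y)) x
        = qscale 4 (dbarL (\<lambda>y. rquat (f y $ 1)) x)
    \<and> dbarLR (\<lambda>y. qscale ((norm y)\<^sup>2) (red (f y))) x
        = qscale (-2) (qconj (red (f x)))"
    by (simp add: dbarLR_def dbarR_def dbarL_def qpd_def qadd_def qmul_def qe1_def qe2_def red_def qzero_def qconj_def qscale_def rquat_def norm_sq3) (simp add: algebra_simps)
qed

end
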